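(* Let $A,B\in\mathbb{R}_+^{m\times n}$. Then: (1) $\hat\rho(A,B)\le\rho(A,B)$. (2) Let $\mathbf{y}$ be weakly optimal. If $A\mathbf{y}>\mathbf{0}$ or $B\mathbf{y}>\mathbf{0}$ (all coordinates positive), then $\rho(A,B)=\hat\rho(A,B)$ and $\mathbf{y}$ is optimal. (3) If $A>0$ or $B>0$ (all entries positive), then $\rho(A,B)=\hat\rho(A,B)$ and every weakly optimal vector is optimal. (4) If $B_l\in\mathbb{R}^{m\times n}$, $l\in\mathbb{N}$, have all entries positive and $\lim_{l\to\infty}B_l=B$, then $\lim_{l\to\infty}\rho(A,B_l)=\hat\rho(A,B)$ (in $[0,\infty]$). (5) If $A_l\in\mathbb{R}^{m\times n}$, $l\in\mathbb{N}$, have all entries positive, $\lim_{l\to\infty}A_l=A$, and $B$ has no zero row, then $\lim_{l\to\infty}\rho(A_l,B)=\rho(A,B)$.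
   Context: $[m]=\{1,\dots,m\}$. For $A,B\in\mathbb{R}_+^{m\times n}$ (entrywise nonnegative real matrices) and $\mathbf{x}\in\mathbb{R}^n_+\setminus\{\mathbf{0}\}$, set $r(A,B,\mathbf{x})=\max_{i\in[m]}\frac{(A\mathbf{x})_i}{(B\mathbf{x})_i}\in[0,\infty]$ with the conventions $\frac00=0$ and $\frac c0=\infty$ for $c>0$; equivalently $r(A,B,\mathbf{x})=\inf\{t\ge 0: A\mathbf{x}\le tB\mathbf{x}\}$ (with $\inf\emptyset=\infty$). The Collatz–Wielandt quotient is $\rho(A,B)=\inf\{r(A,B,\mathbf{x}):\mathbf{x}>\mathbf{0}\}$ (infimum over vectors with all coordinates positive) and the weak Collatz–Wielandt quotient is $\hat\rho(A,B)=\inf\{r(A,B,\mathbf{x}):\mathbf{x}\in\mathbb{R}^n_+\setminus\{\mathbf{0}\}\}$. A vector $\mathbf{y}\in\mathbb{R}^n_+\setminus\{\mathbf{0}\}$ is weakly optimal if $r(A,B,\mathbf{y})=\hat\rho(A,B)$; it is optimal if $r(A,B,\mathbf{y})=\rho(A,B)$ and there is a sequence $\mathbf{y}_k>\mathbf{0}$ with $\mathbf{y}_k\to\mathbf{y}$ and $r(A,B,\mathbf{y}_k)\to\rho(A,B)$. *)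

theory Defs
  imports "HOL-Analysis.Analysis"
begin

definition nonneg_mat :: "real^'n^'m \<Rightarrow> bool" where
  "nonneg_mat A \<longleftrightarrow> (\<forall>i j. A $ i $ j \<ge> 0)"

definition pos_mat :: "real^'n^'m \<Rightarrow> bool" where
  "pos_mat A \<longleftrightarrow> (\<forall>i j. A $ i $ j > 0)"

definition nonneg_vec :: "real^'n \<Rightarrow> bool" where
  "nonneg_vec x \<longleftrightarrow> (\<forall>j. x $ j \<ge> 0)"

definition pos_vec :: "real^'n \<Rightarrow> bool" where
  "pos_vec x \<longleftrightarrow> (\<forall>j. x $ j > 0)"

definition cw_div :: "real \<Rightarrow> real \<Rightarrow> ereal" where
  "cw_div a b = (if b > 0 then ereal (a / b) else if a = 0 then 0 else \<infinity>)"

definition cw_r :: "real^'n^'m \<Rightarrow> real^'n^'m \<Rightarrow> real^'n \<Rightarrow> ereal" where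
  "cw_r A B x = Max (range (\<lambda>i. cw_div ((A *v x) $ i) ((B *v x) $ i)))"

definition cw_rho :: "real^'n^'m \<Rightarrow> real^'n^'m \<Rightarrow> ereal" where
  "cw_rho A B = (INF x \<in> {x. pos_vec x}. cw_r A B x)"

definition cw_rho_hat :: "real^'n^'m \<Rightarrow> real^'n^'m \<Rightarrow> ereal" where
  "cw_rho_hat A B = (INF x \<in> {x. nonneg_vec x \<and> x \<noteq> 0}. cw_r A B x)"

definition weakly_optimal :: "real^'n^'m \<Rightarrow> real^'n^'m \<Rightarrow> real^'n \<Rightarrow> bool" where
  "weakly_optimal A B y \<longleftrightarrow> nonneg_vec y \<and> y \<noteq> 0 \<and> cw_r A B y = cw_rho_hat A B"

definition optimal :: "real^'n^'m \<Rightarrow> real^'n^'m \<Rightarrow> real^'n \<Rightarrow> bool" where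
  "optimal A B y \<longleftrightarrow> nonneg_vec y \<and> y \<noteq> 0 \<and> cw_r A B y = cw_rho A B \<and>
     (\<exists>Y::nat \<Rightarrow> real^'n. (\<forall>k. pos_vec (Y k)) \<and> Y \<longlonglongrightarrow> y \<and>
        (\<lambda>k. cw_r A B (Y k)) \<longlonglongrightarrow> cw_rho A B)"

end

theory Submission
  imports Defs
begin

lemma cw_div_nonneg: "a \<ge> 0 \<Longrightarrow> cw_div a b \<ge> 0"
  by (auto simp: cw_div_def)

lemma cw_div_le:
  assumes "a \<ge> 0" "b \<ge> 0" "t \<ge> 0"
  shows "cw_div a b \<le> ereal t \<longleftrightarrow> a \<le> t * b"
  using assms by (auto simp: cw_div_def field_simps)

lemma matvec_nonneg:
  assumes "nonneg_mat C" "nonneg_vec x"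
  shows "(C *v x) $ i \<ge> 0"
  using assms unfolding nonneg_mat_def nonneg_vec_def matrix_vector_mult_def
  by (auto intro!: sum_nonneg)

lemma cw_r_nonneg:
  assumes "nonneg_mat C" "nonneg_vec x"
  shows "cw_r C D x \<ge> 0"
proof -
  have "0 \<le> cw_div ((C *v x) $ undefined) ((D *v x) $ undefined)"
    by (rule cw_div_nonneg[OF matvec_nonneg[OF assms]])
  also have "\<dots> \<le> cw_r C D x" unfolding cw_r_def by (rule Max_ge) auto
  finally show ?thesis .
qed

lemma cw_r_ge: "cw_div ((C *v x) $ i) ((D *v x) $ i) \<le> cw_r C D x"
  unfolding cw_r_def by (rule Max_ge) auto

lemma cw_r_le:
  assumes "nonneg_mat C" "nonneg_mat D" "nonneg_vec x" "t \<ge> 0"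
  shows "cw_r C D x \<le> ereal t \<longleftrightarrow> (\<forall>i. (C *v x) $ i \<le> t * (D *v x) $ i)"
  unfolding cw_r_def
  by (subst Max_le_iff) (auto simp: cw_div_le matvec_nonneg assms)

lemma cw_r_gt:
  "l < cw_r C D x \<longleftrightarrow> (\<exists>i. l < cw_div ((C *v x) $ i) ((D *v x) $ i))"
  unfolding cw_r_def by (subst Max_gr_iff) auto

lemma matvec_tendsto:
  fixes M :: "nat \<Rightarrow> real^'n^'m"
  assumes "M \<longlonglongrightarrow> M0" "X \<longlonglongrightarrow> x0"
  shows "(\<lambda>k. (M k *v X k) $ i) \<longlonglongrightarrow> (M0 *v x0) $ i"
  unfolding matrix_vector_mult_def
  by (auto intro!: tendsto_sum tendsto_mult tendsto_vec_nth assms)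

lemma cw_rho_le: "pos_vec x \<Longrightarrow> cw_rho C D \<le> cw_r C D x"
  unfolding cw_rho_def by (rule INF_lower) auto

lemma cw_rho_hat_le: "nonneg_vec x \<Longrightarrow> x \<noteq> 0 \<Longrightarrow> cw_rho_hat C D \<le> cw_r C D x"
  unfolding cw_rho_hat_def by (rule INF_lower) auto

lemma pos_vec_nonneg: "pos_vec x \<Longrightarrow> nonneg_vec x \<and> x \<noteq> 0"
  unfolding pos_vec_def nonneg_vec_def
  by (metis less_eq_real_def less_irrefl zero_index)

lemma cw_rho_nonneg: "nonneg_mat C \<Longrightarrow> cw_rho C D \<ge> 0"
  unfolding cw_rho_def by (auto intro!: INF_greatest cw_r_nonneg dest: pos_vec_nonneg)

lemma pos_mat_vec:
  assumes "pos_mat C" "nonneg_vec x" "x \<noteq> 0"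
  shows "pos_vec (C *v x)"
proof -
  obtain j where j: "x $ j \<noteq> 0" using assms(3) by (metis vec_eq_iff zero_index)
  then have "x $ j > 0" using assms(2) unfolding nonneg_vec_def by (metis less_eq_real_def)
  show ?thesis unfolding pos_vec_def matrix_vector_mult_def
  proof
    fix i
    show "0 < (\<chi> i. \<Sum>j\<in>UNIV. C $ i $ j * x $ j) $ i"
      using \<open>x $ j > 0\<close> assms(1,2) unfolding pos_mat_def nonneg_vec_def
      by (simp, intro sum_pos2[where i=j]) (auto intro: mult_nonneg_nonneg less_imp_le)
  qed
qed

definition pert :: "real^'n \<Rightarrow> nat \<Rightarrow> real^'n" where
  "pert x k = x + inverse (real (Suc k)) *\<^sub>R 1"

lemma pert_nth: "pert x k $ j = x $ j + inverse (real (Suc k))"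
  by (simp add: pert_def)

lemma pert_pos: "nonneg_vec x \<Longrightarrow> pos_vec (pert x k)"
  unfolding pos_vec_def nonneg_vec_def pert_nth
  by (metis add_nonneg_pos inverse_positive_iff_positive of_nat_0_less_iff zero_less_Suc)

lemma pert_lim: fixes x :: "real^'n" shows "pert x \<longlonglongrightarrow> x"
proof -
  have "(\<lambda>k. x + inverse (real (Suc k)) *\<^sub>R (1::real^'n)) \<longlonglongrightarrow> x + 0 *\<^sub>R 1"
    by (intro tendsto_intros LIMSEQ_inverse_real_of_nat)
  then show ?thesis by (simp add: pert_def[abs_def])
qed

lemma pert_r_lim:
  assumes C: "nonneg_mat C" and D: "nonneg_mat D" and x: "nonneg_vec x"
    and Dx: "pos_vec (D *v x)"
  shows "(\<lambda>k. cw_r C D (pert x k)) \<longlonglongrightarrow> cw_r C D x"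
  unfolding order_tendsto_iff
proof safe
  have xk: "nonneg_vec (pert x k)" for k using pert_pos[OF x] pos_vec_nonneg by blast
  fix l assume "l < cw_r C D x"
  then obtain i where i: "l < cw_div ((C *v x) $ i) ((D *v x) $ i)" by (auto simp: cw_r_gt)
  have Dxi: "(D *v x) $ i > 0" using Dx by (auto simp: pos_vec_def)
  have limD: "(\<lambda>k. (D *v pert x k) $ i) \<longlonglongrightarrow> (D *v x) $ i"
    by (rule matvec_tendsto[OF tendsto_const pert_lim])
  have limC: "(\<lambda>k. (C *v pert x k) $ i) \<longlonglongrightarrow> (C *v x) $ i"
    by (rule matvec_tendsto[OF tendsto_const pert_lim])
  have "(\<lambda>k. ereal ((C *v pert x k) $ i / (D *v pert x k) $ i)) \<longlonglongrightarrow> ereal ((C *v x) $ i / (D *v x) $ i)"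
    using Dxi by (intro tendsto_ereal tendsto_divide limC limD) auto
  moreover have "l < ereal ((C *v x) $ i / (D *v x) $ i)" using i Dxi by (simp add: cw_div_def)
  ultimately have ev1: "\<forall>\<^sub>F k in sequentially. l < ereal ((C *v pert x k) $ i / (D *v pert x k) $ i)"
    by (simp add: order_tendsto_iff)
  have ev2: "\<forall>\<^sub>F k in sequentially. 0 < (D *v pert x k) $ i"
    using limD Dxi by (simp add: order_tendsto_iff)
  show "\<forall>\<^sub>F k in sequentially. l < cw_r C D (pert x k)"
    using ev1 ev2
  proof eventually_elim
    case (elim k)
    then have "l < cw_div ((C *v pert x k) $ i) ((D *v pert x k) $ i)" by (simp add: cw_div_def)
    also have "\<dots> \<le> cw_r C D (pert x k)" by (rule cw_r_ge)
    finally show ?case .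
  qed
next
  have xk: "nonneg_vec (pert x k)" for k using pert_pos[OF x] pos_vec_nonneg by blast
  fix u assume u: "cw_r C D x < u"
  obtain t1 where t1: "cw_r C D x < ereal t1" "ereal t1 < u" using ereal_dense2[OF u] by blast
  obtain t2 where t2: "ereal t1 < ereal t2" "ereal t2 < u" using ereal_dense2[OF t1(2)] by blast
  have t1pos: "t1 \<ge> 0" using cw_r_nonneg[OF C x, of D] t1(1)
    by (metis ereal_less_eq(5) order_le_less_trans order_less_imp_le)
  have t12: "t1 < t2" using t2 by simp
  have le1: "\<forall>i. (C *v x) $ i \<le> t1 * (D *v x) $ i"
    using cw_r_le[OF C D x t1pos] t1(1) by (simp add: less_imp_le)
  have "\<forall>\<^sub>F k in sequentially. \<forall>i. (C *v pert x k) $ i - t2 * (D *v pert x k) $ i < 0"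
  proof (rule eventually_all_finite, rule order_tendstoD)
    fix i
    show "(\<lambda>k. (C *v pert x k) $ i - t2 * (D *v pert x k) $ i) \<longlonglongrightarrow> (C *v x) $ i - t2 * (D *v x) $ i"
      by (intro tendsto_intros matvec_tendsto[OF tendsto_const pert_lim])
    have "(D *v x) $ i > 0" using Dx by (auto simp: pos_vec_def)
    then have "t1 * (D *v x) $ i < t2 * (D *v x) $ i" using t12 by simp
    then show "(C *v x) $ i - t2 * (D *v x) $ i < 0" using le1[rule_format, of i] by linarith
  qed
  then show "\<forall>\<^sub>F k in sequentially. cw_r C D (pert x k) < u"
  proof eventually_elim
    case (elim k)
    have "cw_r C D (pert x k) \<le> ereal t2"
      using elim cw_r_le[OF C D xk, of t2] t1pos t12 by (auto simp: less_imp_le)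
    then show ?case using t2(2) by simp
  qed
qed

lemma rho_le_r_posB:
  assumes C: "nonneg_mat C" and D: "nonneg_mat D" and x: "nonneg_vec x"
    and Dx: "pos_vec (D *v x)"
  shows "cw_rho C D \<le> cw_r C D x"
  by (rule LIMSEQ_le_const[OF pert_r_lim[OF assms]])
     (auto intro: cw_rho_le pert_pos[OF x])

lemma r_inf:
  assumes C: "nonneg_mat C" and D: "nonneg_mat D" and x: "nonneg_vec x"
    and Cx: "pos_vec (C *v x)" and nDx: "\<not> pos_vec (D *v x)"
  shows "cw_r C D x = \<infinity>"
proof -
  obtain i where "\<not> (D *v x) $ i > 0" using nDx by (auto simp: pos_vec_def)
  then have "(D *v x) $ i = 0" using matvec_nonneg[OF D x, of i] by simp
  moreover have "(C *v x) $ i > 0" using Cx by (auto simp: pos_vec_def)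
  ultimately have "cw_div ((C *v x) $ i) ((D *v x) $ i) = \<infinity>" by (simp add: cw_div_def)
  then show ?thesis using cw_r_ge[where C=C and D=D and x=x and i=i] by simp
qed

lemma rho_le_r:
  assumes C: "nonneg_mat C" and D: "nonneg_mat D" and x: "nonneg_vec x"
    and CD: "pos_vec (C *v x) \<or> pos_vec (D *v x)"
  shows "cw_rho C D \<le> cw_r C D x"
  using rho_le_r_posB[OF C D x] r_inf[OF C D x] CD by fastforce

lemma part1: "cw_rho_hat C D \<le> cw_rho C D"
  unfolding cw_rho_hat_def cw_rho_def
  by (rule INF_superset_mono) (auto dest: pos_vec_nonneg)

lemma part2:
  fixes C D :: "real^'n^'m"
  assumes C: "nonneg_mat C" and D: "nonneg_mat D"
    and wo: "weakly_optimal C D y" and pv: "pos_vec (C *v y) \<or> pos_vec (D *v y)"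
  shows "cw_rho C D = cw_rho_hat C D \<and> optimal C D y"
proof -
  have y: "nonneg_vec y" "y \<noteq> 0" and ry: "cw_r C D y = cw_rho_hat C D"
    using wo by (auto simp: weakly_optimal_def)
  have "cw_rho C D \<le> cw_r C D y" by (rule rho_le_r[OF C D y(1) pv])
  then have eq: "cw_rho C D = cw_rho_hat C D" using part1[of C D] ry by simp
  have "\<exists>Y::nat \<Rightarrow> real^'n. (\<forall>k. pos_vec (Y k)) \<and> Y \<longlonglongrightarrow> y \<and>
        (\<lambda>k. cw_r C D (Y k)) \<longlonglongrightarrow> cw_rho C D"
  proof (intro exI conjI allI)
    show "pos_vec (pert y k)" for k by (rule pert_pos[OF y(1)])
    show "pert y \<longlonglongrightarrow> y" by (rule pert_lim)
    show "(\<lambda>k. cw_r C D (pert y k)) \<longlonglongrightarrow> cw_rho C D"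
    proof (cases "pos_vec (D *v y)")
      case True
      then show ?thesis using pert_r_lim[OF C D y(1) True] eq ry by simp
    next
      case False
      then have "cw_r C D y = \<infinity>" using r_inf[OF C D y(1)] pv by blast
      then have inf: "cw_rho C D = \<infinity>" using eq ry by simp
      have "cw_r C D (pert y k) = \<infinity>" for k
        using cw_rho_le[OF pert_pos[OF y(1)], of C D k] inf by simp
      then show ?thesis using inf by simp
    qed
  qed
  then show ?thesis using eq ry y by (auto simp: optimal_def)
qed

lemma part3:
  fixes C D :: "real^'n^'m"
  assumes C: "nonneg_mat C" and D: "nonneg_mat D" and P: "pos_mat C \<or> pos_mat D"
  shows "cw_rho C D = cw_rho_hat C D \<and> (\<forall>y. weakly_optimal C D y \<longrightarrow> optimal C D y)"
proof
  have "cw_rho C D \<le> cw_rho_hat C D"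
    unfolding cw_rho_hat_def
  proof (rule INF_greatest, safe)
    fix x :: "real^'n" assume "nonneg_vec x" "x \<noteq> 0"
    then show "cw_rho C D \<le> cw_r C D x"
      using P pos_mat_vec rho_le_r[OF C D] by blast
  qed
  then show "cw_rho C D = cw_rho_hat C D" using part1[of C D] by simp
  show "\<forall>y. weakly_optimal C D y \<longrightarrow> optimal C D y"
  proof safe
    fix y assume wo: "weakly_optimal C D y"
    then have "pos_vec (C *v y) \<or> pos_vec (D *v y)"
      using P pos_mat_vec by (auto simp: weakly_optimal_def)
    then show "optimal C D y" using part2[OF C D wo] by blast
  qed
qed

lemma pos_mat_nonneg: "pos_mat C \<Longrightarrow> nonneg_mat C"
  unfolding pos_mat_def nonneg_mat_def by (simp add: less_imp_le)

lemma ereal_pos_from: assumes "lo \<ge> (0::ereal)" "lo < ereal s" shows "s > 0"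
proof -
  have "0 < ereal s" using assms by (rule le_less_trans)
  then show ?thesis by simp
qed

lemma aux_div: fixes a b s t :: real assumes "0<s" "s<t" "s/t*a \<le> s*b" shows "a \<le> t*b"
proof -
  have "s/t*a*t \<le> s*b*t" using assms by (intro mult_right_mono) auto
  then have "s*a \<le> s*(t*b)" using assms by (simp add: mult.commute mult.left_commute)
  then show ?thesis using assms by simp
qed

lemma part5:
  fixes A B :: "real^'n^'m" and Al :: "nat \<Rightarrow> real^'n^'m"
  assumes A: "nonneg_mat A" and B: "nonneg_mat B" and pos: "\<forall>l. pos_mat (Al l)"
    and lim: "Al \<longlonglongrightarrow> A" and rows: "\<forall>i. \<exists>j. B $ i $ j \<noteq> 0"
  shows "(\<lambda>l. cw_rho (Al l) B) \<longlonglongrightarrow> cw_rho A B"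
  unfolding order_tendsto_iff
proof safe
  have Al: "nonneg_mat (Al l)" for l using pos pos_mat_nonneg by blast
  fix lo assume lo: "lo < cw_rho A B"
  show "\<forall>\<^sub>F l in sequentially. lo < cw_rho (Al l) B"
  proof (cases "lo < 0")
    case True
    then show ?thesis by (intro always_eventually allI less_le_trans[OF True cw_rho_nonneg[OF Al]])
  next
    case False
    obtain s where s: "lo < ereal s" "ereal s < cw_rho A B" using ereal_dense2[OF lo] by blast
    obtain t where t: "ereal s < ereal t" "ereal t < cw_rho A B" using ereal_dense2[OF s(2)] by blast
    have spos: "s > 0" using False s(1) ereal_pos_from[of lo s] by simp
    have st: "s < t" using t by simp
    define c where "c = s / t"
    have c: "0 < c" "c < 1" using spos st by (auto simp: c_def)
    have "\<forall>\<^sub>F l in sequentially. \<forall>i j. c * A $ i $ j \<le> Al l $ i $ j"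
    proof (intro eventually_all_finite)
      fix i j
      show "\<forall>\<^sub>F l in sequentially. c * A $ i $ j \<le> Al l $ i $ j"
      proof (cases "A $ i $ j > 0")
        case True
        have L: "(\<lambda>l. Al l $ i $ j) \<longlonglongrightarrow> A $ i $ j" by (intro tendsto_vec_nth lim)
        have "c * A $ i $ j < A $ i $ j" using True c by simp
        from order_tendstoD(1)[OF L this] show ?thesis by (rule eventually_mono) simp
      next
        case False
        then have "A $ i $ j = 0" using A by (auto simp: nonneg_mat_def intro: antisym)
        then show ?thesis using Al by (auto simp: nonneg_mat_def)
      qed
    qed
    then show ?thesis
    proof eventually_elim
      case (elim l)
      have "ereal s \<le> cw_rho (Al l) B"
        unfolding cw_rho_def
      proof (rule INF_greatest, rule ccontr, safe)
        fix x :: "real^'n" assume x: "pos_vec x" and ns: "\<not> ereal s \<le> cw_r (Al l) B x"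
        have xn: "nonneg_vec x" using x pos_vec_nonneg by blast
        have "cw_r (Al l) B x \<le> ereal s" using ns by simp
        then have le: "\<forall>i. (Al l *v x) $ i \<le> s * (B *v x) $ i"
          using cw_r_le[OF Al B xn, of s] spos by simp
        have "\<forall>i. (A *v x) $ i \<le> t * (B *v x) $ i"
        proof
          fix i
          have "c * (A *v x) $ i = (\<Sum>j\<in>UNIV. (c * A $ i $ j) * x $ j)"
            by (simp add: matrix_vector_mult_def sum_distrib_left mult.assoc)
          also have "\<dots> \<le> (\<Sum>j\<in>UNIV. Al l $ i $ j * x $ j)"
            using elim xn by (intro sum_mono mult_right_mono) (auto simp: nonneg_vec_def)
          also have "\<dots> = (Al l *v x) $ i" by (simp add: matrix_vector_mult_def)
          finally have "c * (A *v x) $ i \<le> s * (B *v x) $ i" using le by (meson order_trans)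
          then have "(s / t) * (A *v x) $ i \<le> s * (B *v x) $ i" by (simp add: c_def)
          then have "(A *v x) $ i \<le> t * (B *v x) $ i" by (rule aux_div[OF spos st])
          then show "(A *v x) $ i \<le> t * (B *v x) $ i" .
        qed
        then have "cw_r A B x \<le> ereal t"
          using cw_r_le[OF A B xn, of t] spos st by simp
        moreover have "cw_rho A B \<le> cw_r A B x" by (rule cw_rho_le[OF x])
        ultimately show False using t(2) by simp
      qed
      then show ?case using s(1) by simp
    qed
  qed
next
  have Al: "nonneg_mat (Al l)" for l using pos pos_mat_nonneg by blast
  fix u assume u: "cw_rho A B < u"
  then obtain x where x: "pos_vec x" and rx: "cw_r A B x < u"
    unfolding cw_rho_def by (auto simp: INF_less_iff)
  have xn: "nonneg_vec x" using x pos_vec_nonneg by blast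
  obtain t1 where t1: "cw_r A B x < ereal t1" "ereal t1 < u" using ereal_dense2[OF rx] by blast
  obtain t2 where t2: "ereal t1 < ereal t2" "ereal t2 < u" using ereal_dense2[OF t1(2)] by blast
  have t1pos: "t1 \<ge> 0" using cw_r_nonneg[OF A xn, of B] t1(1)
    by (metis ereal_less_eq(5) order_le_less_trans order_less_imp_le)
  have t12: "t1 < t2" using t2 by simp
  have le1: "\<forall>i. (A *v x) $ i \<le> t1 * (B *v x) $ i"
    using cw_r_le[OF A B xn t1pos] t1(1) by (simp add: less_imp_le)
  have Bx: "(B *v x) $ i > 0" for i
  proof -
    obtain j where j: "B $ i $ j \<noteq> 0" using rows by blast
    then have "B $ i $ j > 0" using B unfolding nonneg_mat_def by (metis less_eq_real_def)
    then show ?thesis using x B unfolding matrix_vector_mult_def pos_vec_def nonneg_mat_def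
      by (simp, intro sum_pos2[where i=j]) (auto intro: mult_nonneg_nonneg less_imp_le)
  qed
  have "\<forall>\<^sub>F l in sequentially. \<forall>i. (Al l *v x) $ i - t2 * (B *v x) $ i < 0"
  proof (rule eventually_all_finite, rule order_tendstoD)
    fix i
    show "(\<lambda>l. (Al l *v x) $ i - t2 * (B *v x) $ i) \<longlonglongrightarrow> (A *v x) $ i - t2 * (B *v x) $ i"
      by (intro tendsto_intros matvec_tendsto[OF lim tendsto_const])
    have "t1 * (B *v x) $ i < t2 * (B *v x) $ i" using t12 Bx[of i] by simp
    then show "(A *v x) $ i - t2 * (B *v x) $ i < 0" using le1[rule_format, of i] by linarith
  qed
  then show "\<forall>\<^sub>F l in sequentially. cw_rho (Al l) B < u"
  proof eventually_elim
    case (elim l)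
    have "cw_r (Al l) B x \<le> ereal t2"
      using elim cw_r_le[OF Al B xn, of t2] t1pos t12 by (auto simp: less_imp_le)
    then show ?case using t2(2) cw_rho_le[OF x, of "Al l" B] by simp
  qed
qed

lemma part4:
  fixes A B :: "real^'n^'m" and Bl :: "nat \<Rightarrow> real^'n^'m"
  assumes A: "nonneg_mat A" and B: "nonneg_mat B" and pos: "\<forall>l. pos_mat (Bl l)"
    and lim: "Bl \<longlonglongrightarrow> B"
  shows "(\<lambda>l. cw_rho A (Bl l)) \<longlonglongrightarrow> cw_rho_hat A B"
  unfolding order_tendsto_iff
proof safe
  have Bln: "nonneg_mat (Bl l)" for l using pos pos_mat_nonneg by blast
  fix lo assume lo: "lo < cw_rho_hat A B"
  show "\<forall>\<^sub>F l in sequentially. lo < cw_rho A (Bl l)"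
  proof (cases "lo < 0")
    case True
    then show ?thesis by (intro always_eventually allI less_le_trans[OF True cw_rho_nonneg[OF A]])
  next
    case False
    obtain t where t: "lo < ereal t" "ereal t < cw_rho_hat A B" using ereal_dense2[OF lo] by blast
    have tpos: "t > 0" using False t(1) ereal_pos_from[of lo t] by simp
    have "\<forall>\<^sub>F l in sequentially. \<forall>x. pos_vec x \<longrightarrow> ereal t \<le> cw_r A (Bl l) x"
    proof (rule ccontr)
      assume "\<not> ?thesis"
      then have H: "\<forall>N. \<exists>n. n \<ge> N \<and> (\<exists>x. pos_vec x \<and> cw_r A (Bl n) x < ereal t)"
        unfolding eventually_sequentially by (auto simp: not_le)
      obtain s where s: "\<forall>N. s N \<ge> N \<and> (\<exists>x. pos_vec x \<and> cw_r A (Bl (s N)) x < ereal t)"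
        using choice[OF H] by blast
      have "\<forall>N. \<exists>x. pos_vec x \<and> cw_r A (Bl (s N)) x < ereal t" using s by blast
      from choice[OF this] obtain X where X: "\<forall>N. pos_vec (X N) \<and> cw_r A (Bl (s N)) (X N) < ereal t"
        by blast
      define Z where "Z N = inverse (norm (X N)) *\<^sub>R X N" for N
      have Xn: "nonneg_vec (X N)" "X N \<noteq> 0" for N using X pos_vec_nonneg by blast+
      have nX: "norm (X N) > 0" for N using Xn(2) by simp
      have Zn: "nonneg_vec (Z N)" for N using Xn(1)[of N] nX[of N]
        by (auto simp: Z_def nonneg_vec_def)
      have Znorm: "norm (Z N) = 1" for N using nX[of N] by (simp add: Z_def)
      have ZI: "(A *v Z N) $ i \<le> t * (Bl (s N) *v Z N) $ i" for N i
      proof -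
        have "(A *v X N) $ i \<le> t * (Bl (s N) *v X N) $ i"
          using cw_r_le[OF A Bln Xn(1), of t "s N" N] X tpos by (simp add: less_imp_le)
        then have "inverse (norm (X N)) * (A *v X N) $ i \<le> inverse (norm (X N)) * (t * (Bl (s N) *v X N) $ i)"
          using nX[of N] by (intro mult_left_mono) auto
        then show ?thesis by (simp add: Z_def matrix_vector_mult_scaleR mult.left_commute)
      qed
      have "bounded (range Z)" unfolding bounded_iff using Znorm by auto
      then obtain z r where r: "strict_mono r" and zl: "(Z \<circ> r) \<longlonglongrightarrow> z"
        using bounded_imp_convergent_subsequence by blast
      have zl': "(\<lambda>k. Z (r k)) \<longlonglongrightarrow> z" using zl by (simp add: o_def)
      have sr: "filterlim (\<lambda>k. s (r k)) sequentially sequentially"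
      proof (rule filterlim_at_top_mono[OF filterlim_ident])
        show "\<forall>\<^sub>F k in sequentially. k \<le> s (r k)"
          using seq_suble[OF r] s by (auto intro: order_trans always_eventually)
      qed
      have Bl': "(\<lambda>k. Bl (s (r k))) \<longlonglongrightarrow> B" by (rule filterlim_compose[OF lim sr])
      have zle: "(A *v z) $ i \<le> t * (B *v z) $ i" for i
      proof (rule tendsto_le[OF trivial_limit_sequentially])
        show "(\<lambda>k. t * (Bl (s (r k)) *v Z (r k)) $ i) \<longlonglongrightarrow> t * (B *v z) $ i"
          by (intro tendsto_mult_left matvec_tendsto[OF Bl' zl'])
        show "(\<lambda>k. (A *v Z (r k)) $ i) \<longlonglongrightarrow> (A *v z) $ i"
          by (rule matvec_tendsto[OF tendsto_const zl'])
        show "\<forall>\<^sub>F k in sequentially. (A *v Z (r k)) $ i \<le> t * (Bl (s (r k)) *v Z (r k)) $ i"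
          using ZI by simp
      qed
      have zn: "nonneg_vec z" unfolding nonneg_vec_def
      proof
        fix j
        show "0 \<le> z $ j"
          by (rule LIMSEQ_le_const[OF tendsto_vec_nth[OF zl']]) (use Zn in \<open>auto simp: nonneg_vec_def\<close>)
      qed
      have "(\<lambda>k. norm (Z (r k))) \<longlonglongrightarrow> norm z" by (intro tendsto_norm zl')
      then have "norm z = 1" using Znorm by (simp add: LIMSEQ_const_iff)
      then have z0: "z \<noteq> 0" by auto
      have "cw_r A B z \<le> ereal t" using cw_r_le[OF A B zn, of t] zle tpos by simp
      moreover have "cw_rho_hat A B \<le> cw_r A B z" by (rule cw_rho_hat_le[OF zn z0])
      ultimately show False using t(2) by simp
    qed
    then show ?thesis
    proof eventually_elim
      case (elim l)
      then have "ereal t \<le> cw_rho A (Bl l)" unfolding cw_rho_def by (auto intro: INF_greatest)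
      then show ?case using t(1) by simp
    qed
  qed
next
  have Bln: "nonneg_mat (Bl l)" for l using pos pos_mat_nonneg by blast
  fix u assume u: "cw_rho_hat A B < u"
  then obtain x where xn: "nonneg_vec x" and x0: "x \<noteq> 0" and rx: "cw_r A B x < u"
    unfolding cw_rho_hat_def by (auto simp: INF_less_iff)
  obtain t1 where t1: "cw_r A B x < ereal t1" "ereal t1 < u" using ereal_dense2[OF rx] by blast
  obtain t2 where t2: "ereal t1 < ereal t2" "ereal t2 < u" using ereal_dense2[OF t1(2)] by blast
  have t1pos: "t1 \<ge> 0" using cw_r_nonneg[OF A xn, of B] t1(1)
    by (metis ereal_less_eq(5) order_le_less_trans order_less_imp_le)
  have t12: "t1 < t2" using t2 by simp
  have le1: "\<forall>i. (A *v x) $ i \<le> t1 * (B *v x) $ i"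
    using cw_r_le[OF A B xn t1pos] t1(1) by (simp add: less_imp_le)
  have "\<forall>\<^sub>F l in sequentially. \<forall>i. (A *v x) $ i \<le> t2 * (Bl l *v x) $ i"
  proof (rule eventually_all_finite)
    fix i
    show "\<forall>\<^sub>F l in sequentially. (A *v x) $ i \<le> t2 * (Bl l *v x) $ i"
    proof (cases "(B *v x) $ i > 0")
      case True
      have L: "(\<lambda>l. t2 * (Bl l *v x) $ i) \<longlonglongrightarrow> t2 * (B *v x) $ i"
        by (intro tendsto_mult_left matvec_tendsto[OF lim tendsto_const])
      have "t1 * (B *v x) $ i < t2 * (B *v x) $ i" using t12 True by simp
      then have "(A *v x) $ i < t2 * (B *v x) $ i" using le1[rule_format, of i] by linarith
      from order_tendstoD(1)[OF L this] show ?thesis by (rule eventually_mono) simp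
    next
      case False
      then have "(B *v x) $ i = 0" using matvec_nonneg[OF B xn, of i] by simp
      then have "(A *v x) $ i \<le> 0" using le1[rule_format, of i] by simp
      moreover have "0 \<le> t2 * (Bl l *v x) $ i" for l
        using matvec_nonneg[OF Bln xn, of l i] t1pos t12 by simp
      ultimately show ?thesis by (intro always_eventually allI) (meson order_trans)
    qed
  qed
  then show "\<forall>\<^sub>F l in sequentially. cw_rho A (Bl l) < u"
  proof eventually_elim
    case (elim l)
    have "cw_r A (Bl l) x \<le> ereal t2"
      using elim cw_r_le[OF A Bln xn, of t2] t1pos t12 by (auto simp: less_imp_le)
    moreover have "cw_rho A (Bl l) \<le> cw_r A (Bl l) x"
      using rho_le_r[OF A Bln xn] pos_mat_vec[OF _ xn x0] pos by blast
    ultimately show ?case using t2(2) by simp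
  qed
qed

theorem lemma2p5:
  fixes A B :: "real^'n^'m"
  assumes "nonneg_mat A" and "nonneg_mat B"
  shows "cw_rho_hat A B \<le> cw_rho A B
    \<and> (\<forall>y. weakly_optimal A B y \<and> (pos_vec (A *v y) \<or> pos_vec (B *v y)) \<longrightarrow>
           cw_rho A B = cw_rho_hat A B \<and> optimal A B y)
    \<and> (pos_mat A \<or> pos_mat B \<longrightarrow>
           cw_rho A B = cw_rho_hat A B \<and> (\<forall>y. weakly_optimal A B y \<longrightarrow> optimal A B y))
    \<and> (\<forall>Bl :: nat \<Rightarrow> real^'n^'m. (\<forall>l. pos_mat (Bl l)) \<and> Bl \<longlonglongrightarrow> B \<longrightarrow>
           (\<lambda>l. cw_rho A (Bl l)) \<longlonglongrightarrow> cw_rho_hat A B)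
    \<and> (\<forall>Al :: nat \<Rightarrow> real^'n^'m. (\<forall>l. pos_mat (Al l)) \<and> Al \<longlonglongrightarrow> A \<and>
           (\<forall>i. \<exists>j. B $ i $ j \<noteq> 0) \<longrightarrow>
           (\<lambda>l. cw_rho (Al l) B) \<longlonglongrightarrow> cw_rho A B)"
  using part1[of A B] part2[OF assms] part3[OF assms] part4[OF assms] part5[OF assms]
  by blast

end
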